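(* Let $G:\mathbb{R}^n\to\mathbb{R}$ be a convex function with a proper minimum at the origin and $G(0)=0$, and let $\omega$ and $\delta_0$ be as in the context. Then for all $\delta\le\delta_0$ and for either choice of sign, $$\int_{\{G<\delta\}}e^{-G(x)/\varepsilon}e^{\pm\omega(G(x))/\varepsilon}dx\simeq\int_{\mathbb{R}^n}e^{-G(x)/\varepsilon}dx.$$
   Context: A minimum of $G$ at $0$ is proper if there is $\hat\delta>0$ such that for every $0<\delta<\hat\delta$ there exists $\rho>0$ with $G\ge G(0)+\delta$ on $\partial B_\rho(0)$. $\omega:[0,\infty)\to[0,\infty)$ is continuous and increasing with $\omega(s)/s\to0$ as $s\to0$, and $\delta_0$ is the largest number such that $\omega(\delta)\le\delta/8$ for all $\delta\le4\delta_0$. $f(\varepsilon)\simeq g(\varepsilon)$ means there exist a constant $C$ and an increasing continuous function $\hat\eta:[0,\infty)\to[0,\infty)$ with $\hat\eta(s)\to0$ as $s\to0$, depending only on $\omega$ (and $n$), such that $(1-\hat\eta(C\varepsilon))f(\varepsilon)\le g(\varepsilon)\le(1+\hat\eta(C\varepsilon))f(\varepsilon)$ for all sufficiently small $\varepsilon>0$. *)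

theory Defs
  imports "HOL-Analysis.Analysis"
begin

definition proper_minimum :: "('a::real_normed_vector \<Rightarrow> real) \<Rightarrow> 'a \<Rightarrow> bool" where
  "proper_minimum G x0 \<longleftrightarrow>
     (\<forall>x. G x0 \<le> G x) \<and>
     (\<exists>\<delta>h>0. \<forall>\<delta>. 0 < \<delta> \<and> \<delta> < \<delta>h \<longrightarrow>
        (\<exists>\<rho>>0. \<forall>x\<in>sphere x0 \<rho>. G x \<ge> G x0 + \<delta>))"

definition admissible_eta :: "(real \<Rightarrow> real) \<Rightarrow> bool" where
  "admissible_eta \<eta> \<longleftrightarrow> continuous_on {0..} \<eta> \<and> mono_on {0..} \<eta> \<and>
     (\<forall>s\<ge>0. 0 \<le> \<eta> s) \<and> (\<eta> \<longlongrightarrow> 0) (at_right 0)"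

end

theory Submission
  imports Defs
begin


lemma cvx_homog:
  fixes G :: "'a::euclidean_space \<Rightarrow> real"
  assumes "convex_on UNIV G" "G 0 = 0" "0 \<le> t" "t \<le> 1"
  shows "G (t *\<^sub>R x) \<le> t * G x"
  using convex_onD[OF assms(1), of t 0 x] assms by simp

lemma cvx_homog2:
  fixes G :: "'a::euclidean_space \<Rightarrow> real"
  assumes "convex_on UNIV G" "G 0 = 0" "1 \<le> l"
  shows "l * G x \<le> G (l *\<^sub>R x)"
proof -
  have "G ((1/l) *\<^sub>R (l *\<^sub>R x)) \<le> (1/l) * G (l *\<^sub>R x)"
    using assms by (intro cvx_homog) auto
  then show ?thesis using assms by (simp add: field_simps)
qed

lemma cvx_meas:
  fixes G :: "'a::euclidean_space \<Rightarrow> real"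
  assumes "convex_on UNIV G"
  shows "G \<in> borel_measurable borel"
  by (intro borel_measurable_continuous_onI convex_on_continuous assms) auto

lemma nn_scale:
  fixes F :: "'a::euclidean_space \<Rightarrow> ennreal"
  assumes [measurable]: "F \<in> borel_measurable borel" and l: "l > 0"
  shows "(\<integral>\<^sup>+x. F x \<partial>lborel) = ennreal (l ^ DIM('a)) * (\<integral>\<^sup>+x. F (l *\<^sub>R x) \<partial>lborel)"
proof -
  have "(\<integral>\<^sup>+x. F x \<partial>lborel) = (\<integral>\<^sup>+x. F x \<partial>density (distr lborel borel (\<lambda>x. 0 + l *\<^sub>R x)) (\<lambda>_. ennreal (\<bar>l\<bar>^DIM('a))))"
    using lborel_affine[of l "0::'a"] l by simp
  also have "\<dots> = (\<integral>\<^sup>+x. ennreal (\<bar>l\<bar>^DIM('a)) * F x \<partial>distr lborel borel (\<lambda>x. 0 + l *\<^sub>R x))"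
    by (subst nn_integral_density) auto
  also have "\<dots> = (\<integral>\<^sup>+x. ennreal (\<bar>l\<bar>^DIM('a)) * F (0 + l *\<^sub>R x) \<partial>lborel)"
    by (subst nn_integral_distr) auto
  also have "\<dots> = ennreal (l ^ DIM('a)) * (\<integral>\<^sup>+x. F (l *\<^sub>R x) \<partial>lborel)"
    using l by (subst nn_integral_cmult) auto
  finally show ?thesis .
qed

lemma scale_ineq:
  fixes G :: "'a::euclidean_space \<Rightarrow> real"
  assumes cv: "convex_on UNIV G" and G0: "G 0 = 0" and l: "1 \<le> l" and c: "0 < c"
    and S[measurable]: "S \<in> sets borel" and Sl: "\<And>y. l *\<^sub>R y \<in> S \<Longrightarrow> y \<in> S"
  shows "(\<integral>\<^sup>+x. indicator S x * ennreal (exp (- c * G x)) \<partial>lborel)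
     \<le> ennreal (l ^ DIM('a)) * (\<integral>\<^sup>+x. indicator S x * ennreal (exp (- (l * c) * G x)) \<partial>lborel)"
proof -
  have [measurable]: "G \<in> borel_measurable borel" using cv by (rule cvx_meas)
  have "(\<integral>\<^sup>+x. indicator S x * ennreal (exp (- c * G x)) \<partial>lborel)
     = ennreal (l ^ DIM('a)) * (\<integral>\<^sup>+x. indicator S (l *\<^sub>R x) * ennreal (exp (- c * G (l *\<^sub>R x))) \<partial>lborel)"
    using l by (intro nn_scale) auto
  also have "\<dots> \<le> ennreal (l ^ DIM('a)) * (\<integral>\<^sup>+x. indicator S x * ennreal (exp (- (l * c) * G x)) \<partial>lborel)"
  proof (intro mult_left_mono nn_integral_mono)
    fix x
    have "l * G x \<le> G (l *\<^sub>R x)" using cvx_homog2[OF cv G0 l] .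
    then have "exp (- c * G (l *\<^sub>R x)) \<le> exp (- (l * c) * G x)"
      using c by (simp add: mult_left_mono)
    then show "indicator S (l *\<^sub>R x) * ennreal (exp (- c * G (l *\<^sub>R x))) \<le> indicator S x * ennreal (exp (- (l * c) * G x))"
      using Sl[of x] by (auto simp: indicator_def)
  qed auto
  finally show ?thesis .
qed

lemma pm_bounded:
  fixes G :: "'a::euclidean_space \<Rightarrow> real"
  assumes cv: "convex_on UNIV G" and G0: "G 0 = 0" and pm: "proper_minimum G 0"
  shows "bounded {x. G x < t}"
proof -
  obtain dh where dh: "dh > 0" and H: "\<forall>\<delta>. 0 < \<delta> \<and> \<delta> < dh \<longrightarrow> (\<exists>\<rho>>0. \<forall>x\<in>sphere 0 \<rho>. G x \<ge> G 0 + \<delta>)"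
    using pm unfolding proper_minimum_def by blast
  define d where "d = dh / 2"
  have d: "0 < d" "d < dh" using dh by (auto simp: d_def)
  obtain \<rho> where \<rho>: "\<rho> > 0" and S: "\<forall>x\<in>sphere 0 \<rho>. G x \<ge> d"
    using H d G0 by force
  have "{x. G x < t} \<subseteq> cball 0 (max \<rho> (t * \<rho> / d))"
  proof
    fix x assume "x \<in> {x. G x < t}"
    then have xt: "G x < t" by simp
    show "x \<in> cball 0 (max \<rho> (t * \<rho> / d))"
    proof (rule ccontr)
      assume "x \<notin> cball 0 (max \<rho> (t * \<rho> / d))"
      then have nx: "norm x > \<rho>" "norm x > t * \<rho> / d" by auto
      define s where "s = \<rho> / norm x"
      have nx0: "norm x > 0" using nx \<rho> by linarith
      have s: "0 \<le> s" "s \<le> 1" "s > 0" using nx \<rho> nx0 by (auto simp: s_def field_simps)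
      have "s *\<^sub>R x \<in> sphere 0 \<rho>" using nx \<rho> by (auto simp: s_def)
      then have "d \<le> G (s *\<^sub>R x)" using S by blast
      also have "\<dots> \<le> s * G x" using cvx_homog[OF cv G0 s(1,2)] .
      finally have "d \<le> s * G x" .
      then have "d * norm x \<le> \<rho> * G x" using nx0 by (simp add: s_def field_simps)
      moreover have "t * \<rho> < d * norm x" using nx(2) d by (simp add: field_simps)
      moreover have "\<rho> * G x < \<rho> * t" using xt \<rho> by simp
      ultimately show False by (simp add: mult.commute)
    qed
  qed
  then show ?thesis using bounded_cball bounded_subset by blast
qed

lemma two_pow_exp: "(2::real) ^ k \<le> exp (real k)"
proof -
  have "(2::real) \<le> exp 1" using exp_ge_add_one_self[of 1] by simp
  then have "(2::real) ^ k \<le> exp 1 ^ k" by (intro power_mono) auto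
  also have "\<dots> = exp (real k)" by (simp add: exp_of_nat_mult[symmetric])
  finally show ?thesis .
qed

lemma finite_J:
  fixes G :: "'a::euclidean_space \<Rightarrow> real"
  assumes cv: "convex_on UNIV G" and G0: "G 0 = 0" and Gnn: "\<And>x. 0 \<le> G x"
    and pm: "proper_minimum G 0" and c: "0 < c"
  shows "(\<integral>\<^sup>+x. ennreal (exp (- c * G x)) \<partial>lborel) < \<infinity>"
proof -
  have [measurable]: "G \<in> borel_measurable borel" using cv by (rule cvx_meas)
  define n where "n = DIM('a)"
  define B where "B = real (n + 1)"
  define M where "M = emeasure lborel {x. c * G x < B}"
  have setB: "{x. c * G x < B} = {x. G x < B / c}" using c by (auto simp: field_simps)
  have Mfin: "M < \<infinity>" unfolding M_def setB
    by (intro emeasure_bounded_finite pm_bounded[OF cv G0 pm])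
  then obtain m where m: "M = ennreal m" "0 \<le> m" by (cases M) auto
  have q: "2 ^ n * exp (- B) \<le> 1 / 2"
  proof -
    have "(2::real) ^ (n+1) \<le> exp B" unfolding B_def by (rule two_pow_exp)
    then show ?thesis by (simp add: exp_minus field_simps)
  qed
  define J where "J R = (\<integral>\<^sup>+x. indicator (ball (0::'a) R) x * ennreal (exp (- c * G x)) \<partial>lborel)" for R
  have JR: "J R \<le> ennreal (2 * 2 ^ n * m)" if R: "R > 0" for R
  proof -
    have Jfin: "J R < \<infinity>"
    proof -
      have "J R \<le> (\<integral>\<^sup>+x. indicator (ball (0::'a) R) x \<partial>lborel)"
        unfolding J_def
        using c Gnn by (intro nn_integral_mono) (auto simp: indicator_def intro!: mult_nonneg_nonneg)
      also have "\<dots> < \<infinity>" using emeasure_bounded_finite[of "ball (0::'a) R"] by simp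
      finally show ?thesis .
    qed
    then obtain j where j: "J R = ennreal j" "0 \<le> j" by (cases "J R") auto
    have "J R \<le> ennreal (2 ^ n) * (\<integral>\<^sup>+x. indicator (ball (0::'a) R) x * ennreal (exp (- (2 * c) * G x)) \<partial>lborel)"
      unfolding J_def n_def
      using c by (intro scale_ineq[OF cv G0]) (auto, smt (verit) norm_ge_zero)
    also have "(\<integral>\<^sup>+x. indicator (ball (0::'a) R) x * ennreal (exp (- (2 * c) * G x)) \<partial>lborel)
        \<le> (\<integral>\<^sup>+x. indicator {x. c * G x < B} x + ennreal (exp (- B)) * (indicator (ball (0::'a) R) x * ennreal (exp (- c * G x))) \<partial>lborel)"
    proof (intro nn_integral_mono)
      fix x
      show "indicator (ball (0::'a) R) x * ennreal (exp (- (2 * c) * G x))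
         \<le> indicator {x. c * G x < B} x + ennreal (exp (- B)) * (indicator (ball (0::'a) R) x * ennreal (exp (- c * G x)))"
      proof (cases "c * G x < B")
        case True
        have "exp (- (2 * c) * G x) \<le> 1" using c Gnn[of x] by simp
        then have "ennreal (exp (- (2 * c) * G x)) \<le> 1" using ennreal_leI by fastforce
        then have "indicator (ball (0::'a) R) x * ennreal (exp (- (2 * c) * G x)) \<le> 1"
          by (auto simp: indicator_def)
        also have "(1::ennreal) \<le> indicator {x. c * G x < B} x + ennreal (exp (- B)) * (indicator (ball (0::'a) R) x * ennreal (exp (- c * G x)))"
          using True by (simp add: indicator_def)
        finally show ?thesis .
      next
        case False
        have "exp (- (2 * c) * G x) = exp (- (c * G x)) * exp (- c * G x)" by (simp flip: exp_add)
        also have "\<dots> \<le> exp (- B) * exp (- c * G x)" using False by (intro mult_right_mono) auto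
        finally have "exp (- (2 * c) * G x) \<le> exp (- B) * exp (- c * G x)" .
        then show ?thesis using False
          by (auto simp: indicator_def ennreal_mult'[symmetric] intro!: ennreal_leI)
      qed
    qed
    also have "\<dots> = M + ennreal (exp (- B)) * J R"
    proof -
      have [measurable]: "ball (0::'a) R \<in> sets borel" by simp
      have m1: "(\<lambda>x. indicator {x. c * G x < B} x :: ennreal) \<in> borel_measurable lborel" by measurable
      have m2: "(\<lambda>x. ennreal (exp (- B)) * (indicator (ball (0::'a) R) x * ennreal (exp (- c * G x)))) \<in> borel_measurable lborel" by measurable
      have m3: "(\<lambda>x. (indicator (ball (0::'a) R) x * ennreal (exp (- c * G x)))) \<in> borel_measurable lborel" by measurable
      show ?thesis unfolding M_def J_def
        using nn_integral_add[OF m1 m2] nn_integral_cmult[OF m3, of "ennreal (exp (- B))"] by simp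
    qed
    finally have "J R \<le> ennreal (2 ^ n) * (M + ennreal (exp (- B)) * J R)"
      by (simp add: mult_left_mono)
    then have "ennreal j \<le> ennreal (2 ^ n * (m + exp (- B) * j))"
      using j m by (simp add: ennreal_mult'[symmetric] ennreal_plus[symmetric] del: ennreal_plus)
    then have "j \<le> 2 ^ n * (m + exp (- B) * j)"
      using j m by (subst (asm) ennreal_le_iff) auto
    then have "j \<le> 2 ^ n * m + (2 ^ n * exp (- B)) * j" by (simp add: algebra_simps)
    also have "\<dots> \<le> 2 ^ n * m + (1/2) * j" using q j by (intro add_left_mono mult_right_mono) auto
    finally have "j \<le> 2 * 2 ^ n * m" by simp
    then show ?thesis using j by (simp add: ennreal_leI)
  qed
  have "(\<integral>\<^sup>+x. ennreal (exp (- c * G x)) \<partial>lborel) = (\<integral>\<^sup>+x. (SUP i::nat. indicator (ball (0::'a) (real i + 1)) x * ennreal (exp (- c * G x))) \<partial>lborel)"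
  proof (intro nn_integral_cong)
    fix x :: 'a
    obtain k :: nat where "norm x < real k + 1" using reals_Archimedean2[of "norm x"] by (metis add.commute add_strict_increasing zero_less_one less_imp_le)
    then have "(SUP i::nat. indicator (ball (0::'a) (real i + 1)) x * ennreal (exp (- c * G x))) = ennreal (exp (- c * G x))"
      apply (intro antisym SUP_least)
      subgoal by (auto simp: indicator_def)
      subgoal by (rule SUP_upper2[of k]) (auto simp: indicator_def)
      done
    then show "ennreal (exp (- c * G x)) = (SUP i::nat. indicator (ball (0::'a) (real i + 1)) x * ennreal (exp (- c * G x)))" by simp
  qed
  also have "\<dots> = (SUP i::nat. J (real i + 1))"
    unfolding J_def
  proof (rule nn_integral_monotone_convergence_SUP)
    show "incseq (\<lambda>i x. indicator (ball (0::'a) (real i + 1)) x * ennreal (exp (- c * G x)))"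
      by (intro incseq_SucI le_funI mult_right_mono) (auto simp: indicator_def)
    fix i :: nat
    have [measurable]: "ball (0::'a) (real i + 1) \<in> sets borel" by simp
    show "(\<lambda>x. indicator (ball (0::'a) (real i + 1)) x * ennreal (exp (- c * G x))) \<in> borel_measurable lborel"
      by measurable
  qed
  also have "\<dots> \<le> ennreal (2 * 2 ^ n * m)"
    by (intro SUP_least JR) auto
  also have "\<dots> < \<infinity>" by simp
  finally show ?thesis .
qed

lemma pm_nonneg: "proper_minimum G 0 \<Longrightarrow> G 0 = 0 \<Longrightarrow> 0 \<le> G x"
  unfolding proper_minimum_def by metis

lemma integ_exp:
  fixes G :: "'a::euclidean_space \<Rightarrow> real"
  assumes cv: "convex_on UNIV G" and G0: "G 0 = 0" and pm: "proper_minimum G 0" and c: "0 < c"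
  shows "integrable lborel (\<lambda>x. exp (- c * G x))"
proof -
  have [measurable]: "G \<in> borel_measurable borel" using cv by (rule cvx_meas)
  show ?thesis
    by (rule integrableI_nonneg) (use finite_J[OF cv G0 pm_nonneg[OF pm G0] pm c] in auto)
qed

lemma scale_real:
  fixes G :: "'a::euclidean_space \<Rightarrow> real"
  assumes cv: "convex_on UNIV G" and G0: "G 0 = 0" and pm: "proper_minimum G 0" and c: "0 < c"
  shows "(\<integral>x. exp (- (3/4 * c) * G x) \<partial>lborel) \<le> (4/3) ^ DIM('a) * (\<integral>x. exp (- c * G x) \<partial>lborel)"
proof -
  have [measurable]: "G \<in> borel_measurable borel" using cv by (rule cvx_meas)
  have "ennreal (\<integral>x. exp (- (3/4 * c) * G x) \<partial>lborel) = (\<integral>\<^sup>+x. ennreal (exp (- (3/4 * c) * G x)) \<partial>lborel)"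
    by (rule nn_integral_eq_integral[symmetric]) (use integ_exp[OF cv G0 pm, of "3/4*c"] c in auto)
  also have "\<dots> = (\<integral>\<^sup>+x. indicator UNIV x * ennreal (exp (- (3/4 * c) * G x)) \<partial>lborel)" by simp
  also have "\<dots> \<le> ennreal ((4/3) ^ DIM('a)) * (\<integral>\<^sup>+x. indicator UNIV x * ennreal (exp (- ((4/3) * (3/4 * c)) * G x)) \<partial>lborel)"
    by (rule scale_ineq[OF cv G0]) (use c in auto)
  also have "(\<integral>\<^sup>+x. indicator UNIV x * ennreal (exp (- ((4/3) * (3/4 * c)) * G x)) \<partial>lborel) = ennreal (\<integral>x. exp (- c * G x) \<partial>lborel)"
    by simp (rule nn_integral_eq_integral, use integ_exp[OF cv G0 pm c] in auto)
  finally have "ennreal (\<integral>x. exp (- (3/4 * c) * G x) \<partial>lborel) \<le> ennreal ((4/3) ^ DIM('a) * (\<integral>x. exp (- c * G x) \<partial>lborel))"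
    by (simp add: ennreal_mult')
  then show ?thesis
    by (subst (asm) ennreal_le_iff) (auto intro!: mult_nonneg_nonneg integral_nonneg_AE)
qed



lemma fixedK:
  fixes G :: "'a::euclidean_space \<Rightarrow> real" and \<omega> :: "real \<Rightarrow> real"
  assumes cv: "convex_on UNIV G" and G0: "G 0 = 0" and pm: "proper_minimum G 0"
   and \<omega>mono: "mono_on {0..} \<omega>" and \<omega>cont: "continuous_on {0..} \<omega>" and \<omega>nn: "\<forall>s\<ge>0. 0 \<le> \<omega> s"
   and \<omega>ok: "\<forall>s. 0 \<le> s \<and> s \<le> 4 * dz \<longrightarrow> \<omega> s \<le> s / 8"
   and \<epsilon>: "0 < \<epsilon>" and K: "0 \<le> K" and Kd: "K * \<epsilon> \<le> \<delta>" and \<delta>: "0 < \<delta>" "\<delta> \<le> dz"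
   and \<sigma>: "\<sigma> \<in> {-1, 1}"
   and \<tau>: "exp (- K / 8) * (4/3) ^ DIM('a) < 1"
   and \<eta>: "exp (\<omega> (K * \<epsilon>) / \<epsilon>) / (1 - exp (- K / 8) * (4/3) ^ DIM('a)) - 1 \<le> \<eta>"
  shows "(1 - \<eta>) * (LINT x:{x. G x < \<delta>}|lborel. exp (- G x / \<epsilon>) * exp (\<sigma> * \<omega> (G x) / \<epsilon>))
            \<le> (LINT x|lborel. exp (- G x / \<epsilon>))
       \<and> (LINT x|lborel. exp (- G x / \<epsilon>))
            \<le> (1 + \<eta>) * (LINT x:{x. G x < \<delta>}|lborel. exp (- G x / \<epsilon>) * exp (\<sigma> * \<omega> (G x) / \<epsilon>))"
proof -
  define \<tau>' where "\<tau>' = exp (- K / 8) * (4/3) ^ DIM('a)"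
  define w where "w = \<omega> (K * \<epsilon>) / \<epsilon>"
  define E where "E x = exp (- G x / \<epsilon>)" for x
  define F where "F x = exp (- (7/8) * G x / \<epsilon>)" for x
  define g where "g = (LINT x|lborel. E x)"
  define f where "f = (LINT x:{x. G x < \<delta>}|lborel. E x * exp (\<sigma> * \<omega> (G x) / \<epsilon>))"
  define A where "A = (LINT x|lborel. indicator {x. G x < K * \<epsilon>} x * E x)"
  define B where "B = (LINT x|lborel. indicator {x. K * \<epsilon> \<le> G x} x * E x)"
  have Gnn: "0 \<le> G x" for x using pm_nonneg[OF pm G0] .
  have mG[measurable]: "G \<in> borel_measurable borel" using cv by (rule cvx_meas)
  have \<omega>'c: "continuous_on UNIV (\<lambda>s. \<omega> (max 0 s))"
    by (rule continuous_on_compose2[OF \<omega>cont]) (auto intro!: continuous_intros)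
  have m\<omega>'[measurable]: "(\<lambda>s. \<omega> (max 0 s)) \<in> borel_measurable borel"
    using \<omega>'c by (rule borel_measurable_continuous_onI)
  have "(\<lambda>x. \<omega> (G x)) = (\<lambda>x. \<omega> (max 0 (G x)))" using Gnn by (simp add: max_def)
  moreover have "(\<lambda>x. \<omega> (max 0 (G x))) \<in> borel_measurable borel" by measurable
  ultimately have m\<omega>[measurable]: "(\<lambda>x. \<omega> (G x)) \<in> borel_measurable borel" by simp
  have mE[measurable]: "E \<in> borel_measurable borel" unfolding E_def by measurable
  have mF[measurable]: "F \<in> borel_measurable borel" unfolding F_def by measurable
  have intE: "integrable lborel E"
  proof -
    have "integrable lborel (\<lambda>x. exp (- (1/\<epsilon>) * G x))" using integ_exp[OF cv G0 pm, of "1/\<epsilon>"] \<epsilon> by simp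
    then show ?thesis unfolding E_def by simp
  qed
  have intF: "integrable lborel F"
  proof -
    have "integrable lborel (\<lambda>x. exp (- (7/8/\<epsilon>) * G x))" using integ_exp[OF cv G0 pm, of "7/8/\<epsilon>"] \<epsilon> by simp
    then show ?thesis unfolding F_def by simp
  qed
  have EF: "E x \<le> F x" for x unfolding E_def F_def using Gnn[of x] \<epsilon> by (auto simp: divide_simps)
  have tail: "(LINT x|lborel. indicator {x. K * \<epsilon> \<le> G x} x * F x) \<le> \<tau>' * g"
  proof -
    have i2: "integrable lborel (\<lambda>x. exp (- K / 8) * exp (- (3/4 * (1/\<epsilon>)) * G x))"
      using integ_exp[OF cv G0 pm, of "3/4*(1/\<epsilon>)"] \<epsilon> by simp
    have "(LINT x|lborel. indicator {x. K * \<epsilon> \<le> G x} x * F x) \<le> (LINT x|lborel. exp (- K / 8) * exp (- (3/4 * (1/\<epsilon>)) * G x))"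
    proof (rule integral_mono)
      show "integrable lborel (\<lambda>x. indicator {x. K * \<epsilon> \<le> G x} x * F x)"
        by (rule Bochner_Integration.integrable_bound[OF intF]) (auto simp: indicator_def F_def)
      show "integrable lborel (\<lambda>x. exp (- K / 8) * exp (- (3/4 * (1/\<epsilon>)) * G x))" by (rule i2)
      fix x
      show "indicator {x. K * \<epsilon> \<le> G x} x * F x \<le> exp (- K / 8) * exp (- (3/4 * (1/\<epsilon>)) * G x)"
      proof (cases "K * \<epsilon> \<le> G x")
        case True
        then have "K \<le> G x / \<epsilon>" using \<epsilon> by (simp add: field_simps)
        then have "F x = exp (- (G x / \<epsilon>) / 8) * exp (- (3/4 * (1/\<epsilon>)) * G x)"
          unfolding F_def by (simp add: exp_add[symmetric] field_simps)
        also have "\<dots> \<le> exp (- K / 8) * exp (- (3/4 * (1/\<epsilon>)) * G x)"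
          using \<open>K \<le> G x / \<epsilon>\<close> by (intro mult_right_mono) auto
        finally show ?thesis using True by simp
      qed auto
    qed
    also have "\<dots> = exp (- K / 8) * (LINT x|lborel. exp (- (3/4 * (1/\<epsilon>)) * G x))"
      by (rule integral_mult_right_zero)
    also have "\<dots> \<le> exp (- K / 8) * ((4/3) ^ DIM('a) * (LINT x|lborel. exp (- (1/\<epsilon>) * G x)))"
      using scale_real[OF cv G0 pm, of "1/\<epsilon>"] \<epsilon> by (intro mult_left_mono) auto
    also have "(LINT x|lborel. exp (- (1/\<epsilon>) * G x)) = g" unfolding g_def E_def by simp
    finally show ?thesis unfolding \<tau>'_def by simp
  qed
  have g0: "0 \<le> g" unfolding g_def E_def by (intro integral_nonneg_AE) auto
  have \<tau>0: "0 \<le> \<tau>'" unfolding \<tau>'_def by simp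
  have \<tau>1: "\<tau>' < 1" using \<tau> unfolding \<tau>'_def .
  have intA: "integrable lborel (\<lambda>x. indicator {x. G x < K * \<epsilon>} x * E x)"
    by (rule Bochner_Integration.integrable_bound[OF intE]) (auto simp: indicator_def E_def)
  have intB: "integrable lborel (\<lambda>x. indicator {x. K * \<epsilon> \<le> G x} x * E x)"
    by (rule Bochner_Integration.integrable_bound[OF intE]) (auto simp: indicator_def E_def)
  have intBF: "integrable lborel (\<lambda>x. indicator {x. K * \<epsilon> \<le> G x} x * F x)"
    by (rule Bochner_Integration.integrable_bound[OF intF]) (auto simp: indicator_def F_def)
  have gAB: "g = A + B"
  proof -
    have "g = (LINT x|lborel. indicator {x. G x < K * \<epsilon>} x * E x + indicator {x. K * \<epsilon> \<le> G x} x * E x)"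
      unfolding g_def by (intro Bochner_Integration.integral_cong) (auto simp: indicator_def)
    also have "\<dots> = A + B" unfolding A_def B_def by (rule Bochner_Integration.integral_add[OF intA intB])
    finally show ?thesis .
  qed
  have A0: "0 \<le> A" unfolding A_def E_def by (intro integral_nonneg_AE) auto
  have B0: "0 \<le> B" unfolding B_def E_def by (intro integral_nonneg_AE) auto
  have BF: "B \<le> \<tau>' * g"
  proof -
    have "B \<le> (LINT x|lborel. indicator {x. K * \<epsilon> \<le> G x} x * F x)"
      unfolding B_def by (rule integral_mono[OF intB intBF]) (auto simp: indicator_def EF)
    then show ?thesis using tail by simp
  qed
  have w0: "0 \<le> w" unfolding w_def using \<omega>nn K \<epsilon> by auto
  have wG: "\<omega> (G x) / \<epsilon> \<le> w" if "G x < K * \<epsilon>" for x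
  proof -
    have "\<omega> (G x) \<le> \<omega> (K * \<epsilon>)" using \<omega>mono Gnn[of x] that K \<epsilon>
      by (intro mono_onD[OF \<omega>mono]) auto
    then show ?thesis unfolding w_def using \<epsilon> by (simp add: divide_right_mono)
  qed
  have \<eta>': "exp w / (1 - \<tau>') - 1 \<le> \<eta>" using \<eta> unfolding w_def \<tau>'_def .
  have e1: "1 \<le> exp w" using w0 by simp
  have e2: "1 - \<tau>' \<le> exp w" using e1 \<tau>0 by linarith
  have q1: "1 \<le> exp w / (1 - \<tau>')" using e2 \<tau>1 by (subst le_divide_eq) auto
  have \<eta>0: "0 \<le> \<eta>" using q1 \<eta>' by simp
  have f_def': "f = (LINT x|lborel. indicator {x. G x < \<delta>} x * (E x * exp (\<sigma> * \<omega> (G x) / \<epsilon>)))"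
    unfolding f_def set_lebesgue_integral_def by simp
  have f0: "0 \<le> f" unfolding f_def' E_def by (intro integral_nonneg_AE) auto
  have key: "(1 - \<eta>) * f \<le> g \<and> g \<le> (1 + \<eta>) * f"
  proof (cases "\<sigma> = -1")
    case True
    have intf: "integrable lborel (\<lambda>x. indicator {x. G x < \<delta>} x * (E x * exp (\<sigma> * \<omega> (G x) / \<epsilon>)))"
      by (rule Bochner_Integration.integrable_bound[OF intE])
         (use True \<omega>nn Gnn \<epsilon> in \<open>auto simp: indicator_def E_def mult_le_cancel_left1 intro!: AE_I2\<close>)
    have fg: "f \<le> g" unfolding f_def' g_def
      by (rule integral_mono[OF intf intE]) (use True \<omega>nn Gnn \<epsilon> in \<open>auto simp: indicator_def E_def mult_le_cancel_left1 intro!: AE_I2\<close>)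
    have intA': "integrable lborel (\<lambda>x. exp (- w) * (indicator {x. G x < K * \<epsilon>} x * E x))"
      using intA by simp
    have "exp (- w) * A = (LINT x|lborel. exp (- w) * (indicator {x. G x < K * \<epsilon>} x * E x))"
      unfolding A_def by (rule integral_mult_right_zero[symmetric])
    also have "\<dots> \<le> f" unfolding f_def'
    proof (rule integral_mono[OF intA' intf])
      fix x
      show "exp (- w) * (indicator {x. G x < K * \<epsilon>} x * E x) \<le> indicator {x. G x < \<delta>} x * (E x * exp (\<sigma> * \<omega> (G x) / \<epsilon>))"
      proof (cases "G x < K * \<epsilon>")
        case True2: True
        then have "G x < \<delta>" using Kd by linarith
        have "exp (- w) \<le> exp (\<sigma> * \<omega> (G x) / \<epsilon>)" using wG[OF True2] True by simp
        then show ?thesis using True2 \<open>G x < \<delta>\<close> by (simp add: indicator_def E_def mult.commute)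
      qed (auto simp: indicator_def E_def)
    qed
    finally have Af: "exp (- w) * A \<le> f" .
    have "(1 - \<tau>') * g \<le> A" using gAB BF by (simp add: algebra_simps)
    then have "exp (- w) * ((1 - \<tau>') * g) \<le> f" using Af by (meson exp_ge_zero mult_left_mono order_trans)
    then have "(1 - \<tau>') * g \<le> exp w * f" by (simp add: exp_minus field_simps)
    then have "g \<le> exp w / (1 - \<tau>') * f" using \<tau>1 by (simp add: field_simps)
    also have "\<dots> \<le> (1 + \<eta>) * f" using \<eta>' f0 by (intro mult_right_mono) auto
    finally have up: "g \<le> (1 + \<eta>) * f" .
    have "(1 - \<eta>) * f \<le> f" using \<eta>0 f0 by (simp add: algebra_simps)
    then show ?thesis using up fg by linarith
  next
    case False
    then have s1: "\<sigma> = 1" using \<sigma> by auto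
    have ptw: "indicator {x. G x < \<delta>} x * (E x * exp (\<sigma> * \<omega> (G x) / \<epsilon>))
          \<le> exp w * (indicator {x. G x < K * \<epsilon>} x * E x) + indicator {x. K * \<epsilon> \<le> G x} x * F x" for x
    proof (cases "G x < K * \<epsilon>")
      case True
      then have "exp (\<sigma> * \<omega> (G x) / \<epsilon>) \<le> exp w" using wG[OF True] s1 by simp
      then show ?thesis using True by (auto simp: indicator_def E_def F_def mult_left_mono)
    next
      case False
      show ?thesis
      proof (cases "G x < \<delta>")
        case True
        have "\<omega> (G x) \<le> G x / 8" using \<omega>ok Gnn[of x] True \<delta> by auto
        then have "- G x / \<epsilon> + \<sigma> * \<omega> (G x) / \<epsilon> \<le> - (7/8) * G x / \<epsilon>"
          using s1 \<epsilon> by (simp add: field_simps)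
        then have "E x * exp (\<sigma> * \<omega> (G x) / \<epsilon>) \<le> F x" unfolding E_def F_def by (simp flip: exp_add)
        then show ?thesis using True False by (auto simp: indicator_def F_def)
      qed (use False in \<open>auto simp: indicator_def F_def E_def\<close>)
    qed
    have intf: "integrable lborel (\<lambda>x. indicator {x. G x < \<delta>} x * (E x * exp (\<sigma> * \<omega> (G x) / \<epsilon>)))"
    proof (rule Bochner_Integration.integrable_bound[where f = "\<lambda>x. exp w * (indicator {x. G x < K * \<epsilon>} x * E x) + indicator {x. K * \<epsilon> \<le> G x} x * F x"])
      show "integrable lborel (\<lambda>x. exp w * (indicator {x. G x < K * \<epsilon>} x * E x) + indicator {x. K * \<epsilon> \<le> G x} x * F x)"
        using intA intBF by auto
      show "AE x in lborel. norm (indicator {x. G x < \<delta>} x * (E x * exp (\<sigma> * \<omega> (G x) / \<epsilon>)))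
          \<le> norm (exp w * (indicator {x. G x < K * \<epsilon>} x * E x) + indicator {x. K * \<epsilon> \<le> G x} x * F x)"
        using ptw by (auto simp: E_def F_def indicator_def)
    qed measurable
    have "f \<le> (LINT x|lborel. exp w * (indicator {x. G x < K * \<epsilon>} x * E x) + indicator {x. K * \<epsilon> \<le> G x} x * F x)"
      unfolding f_def' by (rule integral_mono[OF intf]) (use intA intBF ptw in auto)
    also have "\<dots> = exp w * A + (LINT x|lborel. indicator {x. K * \<epsilon> \<le> G x} x * F x)"
      unfolding A_def using intA intBF by (simp add: integral_mult_right_zero)
    also have "\<dots> \<le> exp w * g + \<tau>' * g"
      using tail gAB B0 by (intro add_mono mult_left_mono) auto
    finally have fup: "f \<le> (exp w + \<tau>') * g" by (simp add: algebra_simps)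
    have "(exp w + \<tau>') * (1 - \<tau>') \<le> exp w"
    proof -
      have "1 \<le> exp w" using w0 by simp
      have "1 - exp w - \<tau>' \<le> 0" using \<open>1 \<le> exp w\<close> \<tau>0 by linarith
      then have "\<tau>' * (1 - exp w - \<tau>') \<le> 0" using \<tau>0 by (intro mult_nonneg_nonpos) auto
      then show ?thesis by (simp add: algebra_simps)
    qed
    then have "exp w + \<tau>' \<le> exp w / (1 - \<tau>')" using \<tau>1 by (simp add: field_simps)
    also have "\<dots> \<le> 1 + \<eta>" using \<eta>' by simp
    finally have "f \<le> (1 + \<eta>) * g" using fup g0 by (meson mult_right_mono order_trans)
    have low: "(1 - \<eta>) * f \<le> g"
    proof (cases "\<eta> \<le> 1")
      case True
      then have "(1 - \<eta>) * f \<le> (1 - \<eta>) * ((1 + \<eta>) * g)" using \<open>f \<le> (1 + \<eta>) * g\<close> by (intro mult_left_mono) auto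
      also have "\<dots> = (1 - \<eta> * \<eta>) * g" by (simp add: algebra_simps)
      also have "\<dots> \<le> g" using g0 \<eta>0 by (simp add: algebra_simps)
      finally show ?thesis .
    next
      case False
      then have "(1 - \<eta>) * f \<le> 0" using f0 by (intro mult_nonpos_nonneg) auto
      then show ?thesis using g0 by linarith
    qed
    have ptw2: "E x \<le> indicator {x. G x < \<delta>} x * (E x * exp (\<sigma> * \<omega> (G x) / \<epsilon>)) + indicator {x. K * \<epsilon> \<le> G x} x * E x" for x
    proof (cases "G x < \<delta>")
      case True
      have "1 \<le> exp (\<sigma> * \<omega> (G x) / \<epsilon>)" using s1 \<omega>nn Gnn[of x] \<epsilon> by simp
      then have "E x \<le> E x * exp (\<sigma> * \<omega> (G x) / \<epsilon>)" unfolding E_def by (simp add: mult_le_cancel_left1)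
      then show ?thesis using True by (auto simp: indicator_def E_def)
    next
      case False
      then show ?thesis using Kd by (auto simp: indicator_def E_def)
    qed
    have "g \<le> (LINT x|lborel. indicator {x. G x < \<delta>} x * (E x * exp (\<sigma> * \<omega> (G x) / \<epsilon>)) + indicator {x. K * \<epsilon> \<le> G x} x * E x)"
      unfolding g_def by (rule integral_mono) (use intE intf intB ptw2 in auto)
    also have "\<dots> = f + B" unfolding f_def' B_def by (rule Bochner_Integration.integral_add[OF intf intB])
    finally have "g \<le> f + B" .
    then have "(1 - \<tau>') * g \<le> f" using BF by (simp add: algebra_simps)
    then have "g \<le> f / (1 - \<tau>')" using \<tau>1 by (simp add: field_simps)
    also have "\<dots> \<le> exp w * f / (1 - \<tau>')" using f0 w0 \<tau>1 by (intro divide_right_mono) (auto simp: mult_le_cancel_right1)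
    also have "\<dots> = (exp w / (1 - \<tau>')) * f" by simp
    also have "\<dots> \<le> (1 + \<eta>) * f" using \<eta>' f0 by (intro mult_right_mono) auto
    finally show ?thesis using low by simp
  qed
  then show ?thesis unfolding f_def g_def E_def by simp
qed



lemma majorant:
  fixes \<Phi> :: "real \<Rightarrow> real"
  assumes lim: "(\<Phi> \<longlongrightarrow> 0) (at_right 0)"
  shows "\<exists>\<eta>. admissible_eta \<eta> \<and> (\<forall>\<^sub>F s in at_right 0. \<Phi> s \<le> \<eta> s)"
proof -
  define m where "m t = min 1 \<bar>\<Phi> t\<bar>" for t
  define h where "h s t = m t * min 1 (max 0 s / t)" for s t
  define \<eta> where "\<eta> s = Sup (h s ` {0<..})" for s
  have m01: "0 \<le> m t" "m t \<le> 1" for t unfolding m_def by auto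
  have h01: "0 \<le> h s t" "h s t \<le> 1" if "t > 0" for s t
    using m01[of t] that unfolding h_def
    by (auto intro!: mult_nonneg_nonneg mult_le_one)
  have bdd: "bdd_above (h s ` {0<..})" for s using h01 by (auto intro!: bdd_aboveI[of _ 1])
  have ne: "{0<..} \<noteq> ({}::real set)" by (auto intro: exI[of _ 1])
  have \<eta>ge: "h s t \<le> \<eta> s" if "t > 0" for s t
    unfolding \<eta>_def using bdd that by (intro cSUP_upper) auto
  have \<eta>0: "0 \<le> \<eta> s" for s using \<eta>ge[of 1 s] h01[of 1 s] by simp
  have \<eta>m: "m s \<le> \<eta> s" if "s > 0" for s
    using \<eta>ge[of s s] that by (simp add: h_def)
  have \<eta>le: "\<eta> s \<le> B" if "\<And>t. t > 0 \<Longrightarrow> h s t \<le> B" for s B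
    unfolding \<eta>_def using ne that by (intro cSUP_least) auto
  have \<eta>zero: "\<eta> 0 = 0" using \<eta>le[of 0 0] \<eta>0[of 0] by (simp add: h_def)
  have \<eta>mono: "\<eta> s \<le> \<eta> s'" if "s \<le> s'" for s s'
  proof (rule \<eta>le)
    fix t :: real assume t: "t > 0"
    have "max 0 s / t \<le> max 0 s' / t" using t that by (intro divide_right_mono) auto
    then have "min 1 (max 0 s / t) \<le> min 1 (max 0 s' / t)" by (rule min.mono[OF order_refl])
    then have "h s t \<le> h s' t" unfolding h_def using m01[of t] by (intro mult_left_mono) auto
    then show "h s t \<le> \<eta> s'" using \<eta>ge[OF t, of s'] by linarith
  qed
  have mod: "\<eta> s' \<le> \<eta> s + max e ((s' - s) / a)"
    if ss: "0 \<le> s" "s \<le> s'" and a: "a > 0" and ma: "\<And>t. 0 < t \<Longrightarrow> t \<le> a \<Longrightarrow> m t \<le> e" for s s' a e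
  proof (rule \<eta>le)
    fix t :: real assume t: "t > 0"
    have "min 1 (s' / t) \<le> min 1 (s / t) + min 1 ((s' - s) / t)"
      using t ss by (auto simp: min_def field_simps)
    then have "h s' t \<le> h s t + m t * min 1 ((s' - s) / t)"
      unfolding h_def using ss m01[of t] by (auto simp: max_def simp flip: distrib_left intro!: mult_left_mono)
    also have "m t * min 1 ((s' - s) / t) \<le> max e ((s' - s) / a)"
    proof (cases "t \<le> a")
      case True
      have "m t * min 1 ((s' - s) / t) \<le> m t * 1" using m01[of t] by (intro mult_left_mono) auto
      then show ?thesis using ma[OF t True] by linarith
    next
      case False
      have "m t * min 1 ((s' - s) / t) \<le> 1 * ((s' - s) / t)"
        using m01[of t] t ss by (intro mult_mono) auto
      also have "\<dots> \<le> (s' - s) / a" using False a ss by (auto intro!: divide_left_mono)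
      finally show ?thesis by linarith
    qed
    finally show "h s' t \<le> \<eta> s + max e ((s' - s) / a)" using \<eta>ge[OF t, of s] by linarith
  qed
  have small: "\<exists>a>0. \<forall>t. 0 < t \<and> t \<le> a \<longrightarrow> m t \<le> e" if e: "e > 0" for e
  proof -
    have "\<forall>\<^sub>F t in at_right 0. \<bar>\<Phi> t\<bar> < e"
      using lim e by (auto simp: tendsto_iff dist_real_def)
    then obtain b where b: "b > 0" "\<And>t. 0 < t \<Longrightarrow> t < b \<Longrightarrow> \<bar>\<Phi> t\<bar> < e"
      unfolding eventually_at_right_field by auto
    show ?thesis
    proof (intro exI[of _ "b/2"] conjI allI impI)
      fix t :: real assume "0 < t \<and> t \<le> b / 2"
      then have "\<bar>\<Phi> t\<bar> < e" using b by auto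
      then show "m t \<le> e" by (simp add: m_def)
    qed (use b in auto)
  qed
  have cont: "continuous_on {0..} \<eta>"
    unfolding continuous_on_iff
  proof (intro ballI allI impI)
    fix x e :: real assume x: "x \<in> {0..}" and e: "0 < e"
    obtain a where a: "a > 0" "\<And>t. 0 < t \<Longrightarrow> t \<le> a \<Longrightarrow> m t \<le> e / 2"
      using small[of "e/2"] e by auto
    show "\<exists>d>0. \<forall>x'\<in>{0..}. dist x' x < d \<longrightarrow> dist (\<eta> x') (\<eta> x) < e"
    proof (intro exI[of _ "a * e / 2"] conjI ballI impI)
      show "a * e / 2 > 0" using a e by simp
      fix x' :: real assume x': "x' \<in> {0..}" and d: "dist x' x < a * e / 2"
      have "max (e/2) (\<bar>x' - x\<bar> / a) < e"
        using d a e by (auto simp: dist_real_def field_simps)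
      moreover have "\<bar>\<eta> x' - \<eta> x\<bar> \<le> max (e/2) (\<bar>x' - x\<bar> / a)"
      proof (cases "x \<le> x'")
        case True
        then show ?thesis using mod[of x x' a "e/2"] a x \<eta>mono[OF True] by auto
      next
        case False
        then show ?thesis using mod[of x' x a "e/2"] a x' \<eta>mono[of x' x] by auto
      qed
      ultimately show "dist (\<eta> x') (\<eta> x) < e" unfolding dist_real_def by linarith
    qed
  qed
  have lim\<eta>: "(\<eta> \<longlongrightarrow> 0) (at_right 0)"
  proof -
    have "(\<eta> \<longlongrightarrow> \<eta> 0) (at 0 within {0..})"
      using cont by (simp add: continuous_on_def)
    then have "(\<eta> \<longlongrightarrow> \<eta> 0) (at 0 within {0<..})"
      by (rule tendsto_within_subset) auto
    then show ?thesis using \<eta>zero by simp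
  qed
  have adm: "admissible_eta \<eta>"
    unfolding admissible_eta_def
    using cont lim\<eta> \<eta>0 \<eta>mono by (auto intro: mono_onI)
  have ev: "\<forall>\<^sub>F s in at_right 0. \<Phi> s \<le> \<eta> s"
  proof -
    have "\<forall>\<^sub>F t in at_right 0. \<bar>\<Phi> t\<bar> < 1"
      using lim by (auto simp: tendsto_iff dist_real_def)
    moreover have "\<forall>\<^sub>F t in at_right (0::real). t > 0" by (simp add: eventually_at_right_less)
    ultimately show ?thesis
    proof eventually_elim
      case (elim s)
      then have "\<Phi> s \<le> m s" by (auto simp: m_def)
      then show ?case using \<eta>m[of s] elim by linarith
    qed
  qed
  show ?thesis using adm ev by blast
qed



theorem lemma3p9:
  fixes \<omega> :: "real \<Rightarrow> real" and \<delta>0 :: real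
  assumes \<omega>_cont: "continuous_on {0..} \<omega>"
    and \<omega>_mono: "mono_on {0..} \<omega>"
    and \<omega>_nonneg: "\<forall>s\<ge>0. 0 \<le> \<omega> s"
    and \<omega>_small: "((\<lambda>s. \<omega> s / s) \<longlongrightarrow> 0) (at_right 0)"
    and \<delta>0_ok: "\<forall>s. 0 \<le> s \<and> s \<le> 4 * \<delta>0 \<longrightarrow> \<omega> s \<le> s / 8"
    and \<delta>0_largest: "\<forall>d. (\<forall>s. 0 \<le> s \<and> s \<le> 4 * d \<longrightarrow> \<omega> s \<le> s / 8) \<longrightarrow> d \<le> \<delta>0"
  shows "\<exists>(C::real) \<eta>. C > 0 \<and> admissible_eta \<eta> \<and>
    (\<forall>(G::'a::euclidean_space \<Rightarrow> real) \<delta> (\<sigma>::real).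
       convex_on UNIV G \<and> proper_minimum G 0 \<and> G 0 = 0 \<and>
       0 < \<delta> \<and> \<delta> \<le> \<delta>0 \<and> \<sigma> \<in> {-1, 1} \<longrightarrow>
       (\<forall>\<^sub>F \<epsilon> in at_right 0.
          (let f = (LINT x:{x. G x < \<delta>}|lborel. exp (- G x / \<epsilon>) * exp (\<sigma> * \<omega> (G x) / \<epsilon>));
               g = (LINT x|lborel. exp (- G x / \<epsilon>))
           in (1 - \<eta> (C * \<epsilon>)) * f \<le> g \<and> g \<le> (1 + \<eta> (C * \<epsilon>)) * f)))"
proof -
  define n where "n = DIM('a)"
  define \<tau> where "\<tau> K = exp (- K / 8) * (4/3) ^ n" for K :: real
  define \<phi> where "\<phi> \<epsilon> K = exp (\<omega> (K * \<epsilon>) / \<epsilon>) / (1 - \<tau> K) - 1" for \<epsilon> K :: real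
  have \<tau>lim: "(\<lambda>K::nat. \<tau> (real K)) \<longlonglongrightarrow> 0"
  proof -
    have eq: "\<tau> (real K) = exp (- 1/8 :: real) ^ K * (4/3) ^ n" for K :: nat
      unfolding \<tau>_def by (simp add: exp_of_nat_mult[symmetric] field_simps)
    have "(\<lambda>K::nat. exp (- 1/8 :: real) ^ K * (4/3) ^ n) \<longlonglongrightarrow> 0 * (4/3) ^ n"
      by (intro tendsto_mult LIMSEQ_power_zero tendsto_const) auto
    then show ?thesis unfolding eq by simp
  qed
  have \<tau>mono: "\<tau> K' \<le> \<tau> K" if "K \<le> K'" for K K' unfolding \<tau>_def using that by (intro mult_right_mono) auto
  have \<tau>0: "0 \<le> \<tau> K" for K unfolding \<tau>_def by simp
  obtain K0 :: nat where K0: "\<tau> (real K0) < 1"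
    using \<tau>lim[THEN order_tendstoD(2), of 1] by (auto dest: eventually_happens)
  define S where "S \<epsilon> = {K::nat. K0 \<le> K \<and> real K \<le> 1 / sqrt \<epsilon>}" for \<epsilon> :: real
  have Sfin: "finite (S \<epsilon>)" for \<epsilon>
  proof -
    have "S \<epsilon> \<subseteq> {..nat (ceiling (1 / sqrt \<epsilon>))}"
    proof
      fix K assume "K \<in> S \<epsilon>"
      then have r: "real K \<le> 1 / sqrt \<epsilon>" unfolding S_def by auto
      have "real K \<le> real_of_int (ceiling (1 / sqrt \<epsilon>))" using r le_of_int_ceiling order_trans by blast
      then have "int K \<le> ceiling (1 / sqrt \<epsilon>)" by linarith
      then show "K \<in> {..nat (ceiling (1 / sqrt \<epsilon>))}" by auto
    qed
    then show ?thesis by (rule finite_subset) auto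
  qed
  define \<Phi> where "\<Phi> \<epsilon> = (if S \<epsilon> = {} then 0 else Min ((\<lambda>K. \<phi> \<epsilon> (real K)) ` S \<epsilon>))" for \<epsilon>
  have \<phi>0: "0 \<le> \<phi> \<epsilon> (real K)" if "K0 \<le> K" "0 < \<epsilon>" for \<epsilon> K
  proof -
    have t: "\<tau> (real K) < 1" using \<tau>mono[of "real K0" "real K"] that K0 by auto
    have "1 \<le> exp (\<omega> (real K * \<epsilon>) / \<epsilon>)" using \<omega>_nonneg that by simp
    moreover have "1 - \<tau> (real K) \<le> 1" using \<tau>0 by simp
    ultimately have "1 - \<tau> (real K) \<le> exp (\<omega> (real K * \<epsilon>) / \<epsilon>)" by linarith
    then show ?thesis unfolding \<phi>_def using t by (simp add: le_divide_eq)
  qed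
  have \<Phi>lim: "(\<Phi> \<longlongrightarrow> 0) (at_right 0)"
  proof (rule order_tendstoI)
    fix e :: real assume "e < 0"
    have "\<forall>\<^sub>F \<epsilon> in at_right 0. (0::real) < \<epsilon>" by (simp add: eventually_at_right_less)
    then show "\<forall>\<^sub>F \<epsilon> in at_right 0. e < \<Phi> \<epsilon>"
    proof eventually_elim
      case (elim \<epsilon>)
      show ?case
      proof (cases "S \<epsilon> = {}")
        case False
        have "0 \<le> \<Phi> \<epsilon>" unfolding \<Phi>_def using False Sfin[of \<epsilon>] \<phi>0 elim
          by (auto simp: S_def)
        then show ?thesis using \<open>e < 0\<close> by linarith
      qed (use \<open>e < 0\<close> in \<open>simp add: \<Phi>_def\<close>)
    qed
  next
    fix e :: real assume e: "e > 0"
    have "(\<lambda>K::nat. 1 / (1 - \<tau> (real K)) - 1) \<longlonglongrightarrow> 1 / (1 - 0) - 1"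
      by (intro tendsto_intros \<tau>lim) auto
    then have "\<forall>\<^sub>F K in sequentially. 1 / (1 - \<tau> (real K)) - 1 < e / 2"
      using e by (intro order_tendstoD(2)) auto
    moreover have "\<forall>\<^sub>F K in sequentially. K0 + 1 \<le> K" by (rule eventually_ge_at_top)
    then have "\<forall>\<^sub>F K in sequentially. K0 \<le> K \<and> 1 \<le> K" by (rule eventually_mono) auto
    ultimately obtain K1 :: nat where K1: "1 / (1 - \<tau> (real K1)) - 1 < e / 2" "K0 \<le> K1" "1 \<le> K1"
      by (metis (mono_tags, lifting) eventually_conj eventually_happens' trivial_limit_sequentially)
    have K1pos: "real K1 > 0" using K1 by simp
    have lim1: "((\<lambda>\<epsilon>. \<omega> (real K1 * \<epsilon>) / \<epsilon>) \<longlongrightarrow> 0) (at_right 0)"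
    proof -
      have fl: "filterlim (\<lambda>\<epsilon>. real K1 * \<epsilon>) (at_right 0) (at_right 0)"
        unfolding filterlim_at
      proof
        show "\<forall>\<^sub>F \<epsilon> in at_right 0. real K1 * \<epsilon> \<in> {0<..} \<and> real K1 * \<epsilon> \<noteq> 0"
          using K1pos by (auto simp: eventually_at_right_less intro: eventually_mono[OF eventually_at_right_less])
        have "((\<lambda>\<epsilon>. real K1 * \<epsilon>) \<longlongrightarrow> real K1 * 0) (at_right 0)"
          by (intro tendsto_intros)
        then show "((\<lambda>\<epsilon>. real K1 * \<epsilon>) \<longlongrightarrow> 0) (at_right 0)" by simp
      qed
      have "((\<lambda>\<epsilon>. \<omega> (real K1 * \<epsilon>) / (real K1 * \<epsilon>)) \<longlongrightarrow> 0) (at_right 0)"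
        using filterlim_compose[OF \<omega>_small fl] by (simp add: o_def)
      then have "((\<lambda>\<epsilon>. real K1 * (\<omega> (real K1 * \<epsilon>) / (real K1 * \<epsilon>))) \<longlongrightarrow> real K1 * 0) (at_right 0)"
        by (intro tendsto_intros)
      then show ?thesis
      proof (rule tendsto_eq_rhs[OF tendsto_cong[THEN iffD1], rotated])
        show "\<forall>\<^sub>F \<epsilon> in at_right 0. real K1 * (\<omega> (real K1 * \<epsilon>) / (real K1 * \<epsilon>)) = \<omega> (real K1 * \<epsilon>) / \<epsilon>"
          using K1pos by (auto intro: eventually_mono[OF eventually_at_right_less])
      qed simp
    qed
    have "((\<lambda>\<epsilon>. \<phi> \<epsilon> (real K1)) \<longlongrightarrow> exp 0 / (1 - \<tau> (real K1)) - 1) (at_right 0)"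
      unfolding \<phi>_def by (intro tendsto_intros lim1) (use K0 \<tau>mono[of "real K0" "real K1"] K1 in auto)
    then have ev1: "\<forall>\<^sub>F \<epsilon> in at_right 0. \<phi> \<epsilon> (real K1) < e"
    proof (rule order_tendstoD(2))
      show "exp 0 / (1 - \<tau> (real K1)) - 1 < e" using K1(1) e by simp
    qed
    have ev2: "\<forall>\<^sub>F \<epsilon> in at_right 0. \<epsilon> < 1 / (real K1)^2"
      using K1pos by (intro order_tendstoD(2)[OF tendsto_ident_at]) auto
    have ev3: "\<forall>\<^sub>F \<epsilon> in at_right 0. (0::real) < \<epsilon>" by (simp add: eventually_at_right_less)
    from ev1 ev2 ev3 show "\<forall>\<^sub>F \<epsilon> in at_right 0. \<Phi> \<epsilon> < e"
    proof eventually_elim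
      case (elim \<epsilon>)
      have "real K1 * sqrt \<epsilon> < 1"
      proof -
        have "sqrt \<epsilon> < sqrt (1 / (real K1)^2)" using elim by (simp add: real_sqrt_less_iff)
        also have "\<dots> = 1 / real K1" by (simp add: real_sqrt_divide)
        finally show ?thesis using K1pos by (simp add: field_simps)
      qed
      then have "real K1 \<le> 1 / sqrt \<epsilon>" using elim by (simp add: field_simps)
      then have K1S: "K1 \<in> S \<epsilon>" unfolding S_def using K1 by auto
      then have "\<Phi> \<epsilon> \<le> \<phi> \<epsilon> (real K1)" unfolding \<Phi>_def using Sfin[of \<epsilon>]
        by (auto intro!: Min_le)
      then show ?case using elim by linarith
    qed
  qed
  obtain \<eta> where \<eta>: "admissible_eta \<eta>" and \<eta>ev: "\<forall>\<^sub>F s in at_right 0. \<Phi> s \<le> \<eta> s"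
    using majorant[OF \<Phi>lim] by blast
  show ?thesis
  proof (intro exI[of _ 1] exI[of _ \<eta>] conjI allI impI)
    show "(1::real) > 0" by simp
    show "admissible_eta \<eta>" by (rule \<eta>)
    fix G :: "'a \<Rightarrow> real" and \<delta> \<sigma> :: real
    assume H: "convex_on UNIV G \<and> proper_minimum G 0 \<and> G 0 = 0 \<and> 0 < \<delta> \<and> \<delta> \<le> \<delta>0 \<and> \<sigma> \<in> {-1, 1}"
    have ev2: "\<forall>\<^sub>F \<epsilon> in at_right 0. \<epsilon> < min (\<delta>^2) (1 / (real K0 + 1)^2)"
      using H by (intro order_tendstoD(2)[OF tendsto_ident_at]) auto
    have ev3: "\<forall>\<^sub>F \<epsilon> in at_right 0. (0::real) < \<epsilon>" by (simp add: eventually_at_right_less)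
    from \<eta>ev ev2 ev3
    show "\<forall>\<^sub>F \<epsilon> in at_right 0.
          (let f = (LINT x:{x. G x < \<delta>}|lborel. exp (- G x / \<epsilon>) * exp (\<sigma> * \<omega> (G x) / \<epsilon>));
               g = (LINT x|lborel. exp (- G x / \<epsilon>))
           in (1 - \<eta> (1 * \<epsilon>)) * f \<le> g \<and> g \<le> (1 + \<eta> (1 * \<epsilon>)) * f)"
    proof eventually_elim
      case (elim \<epsilon>)
      have sq: "sqrt \<epsilon> < \<delta>"
      proof -
        have "sqrt \<epsilon> < sqrt (\<delta>^2)" using elim by (intro real_sqrt_less_mono) simp
        then show ?thesis using H by simp
      qed
      have sq2: "(real K0 + 1) * sqrt \<epsilon> < 1"
      proof -
        have "sqrt \<epsilon> < sqrt (1 / (real K0 + 1)^2)" using elim by (intro real_sqrt_less_mono) simp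
        also have "\<dots> = 1 / (real K0 + 1)" by (simp add: real_sqrt_divide)
        finally show ?thesis by (simp add: field_simps)
      qed
      have sp: "0 < sqrt \<epsilon>" using elim by simp
      have "real K0 * sqrt \<epsilon> + sqrt \<epsilon> < 1" using sq2 by (simp add: algebra_simps)
      then have "real K0 * sqrt \<epsilon> \<le> 1" using sp by linarith
      then have "real K0 \<le> 1 / sqrt \<epsilon>" using elim by (simp add: field_simps)
      then have "K0 \<in> S \<epsilon>" unfolding S_def by auto
      then have Sne: "S \<epsilon> \<noteq> {}" by auto
      have "Min ((\<lambda>K. \<phi> \<epsilon> (real K)) ` S \<epsilon>) \<in> (\<lambda>K. \<phi> \<epsilon> (real K)) ` S \<epsilon>"
        by (rule Min_in) (use Sfin Sne in auto)
      then obtain K where KS: "K \<in> S \<epsilon>" and KPhi0: "Min ((\<lambda>K. \<phi> \<epsilon> (real K)) ` S \<epsilon>) = \<phi> \<epsilon> (real K)"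
        by blast
      have KPhi: "\<phi> \<epsilon> (real K) = \<Phi> \<epsilon>" using KPhi0 Sne unfolding \<Phi>_def by simp
      have KK0: "K0 \<le> K" and Kle: "real K \<le> 1 / sqrt \<epsilon>" using KS unfolding S_def by auto
      have "real K * \<epsilon> \<le> (1 / sqrt \<epsilon>) * \<epsilon>" using Kle elim by (intro mult_right_mono) auto
      also have "\<dots> = sqrt \<epsilon>" using elim by (simp add: field_simps real_sqrt_mult[symmetric] flip: real_sqrt_mult)
      finally have Kd: "real K * \<epsilon> \<le> \<delta>" using sq by linarith
      have "\<tau> (real K) \<le> \<tau> (real K0)" using \<tau>mono[of "real K0" "real K"] KK0 by simp
      then have tK0: "\<tau> (real K) < 1" using K0 by linarith
      then have tK: "exp (- real K / 8) * (4/3) ^ DIM('a) < 1" unfolding \<tau>_def n_def .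
      have "exp (\<omega> (real K * \<epsilon>) / \<epsilon>) / (1 - exp (- real K / 8) * (4/3) ^ DIM('a)) - 1 \<le> \<eta> (1 * \<epsilon>)"
        using KPhi elim unfolding \<phi>_def \<tau>_def n_def by simp
      then have etaK: "exp (\<omega> (real K * \<epsilon>) / \<epsilon>) / (1 - exp (- real K / 8) * (4/3) ^ DIM('a)) - 1 \<le> \<eta> (1 * \<epsilon>)" .
      have cvG: "convex_on UNIV G" and pmG: "proper_minimum G 0" and G0: "G 0 = 0"
        and dpos: "0 < \<delta>" and dle: "\<delta> \<le> \<delta>0" and sg: "\<sigma> \<in> {-1, 1}" using H by auto
      have e0: "0 < \<epsilon>" using elim by simp
      have K0': "0 \<le> real K" by simp
      note fk = fixedK[where G=G and \<omega>=\<omega> and dz=\<delta>0 and \<epsilon>=\<epsilon> and K="real K" and \<delta>=\<delta> and \<sigma>=\<sigma> and \<eta>="\<eta> (1 * \<epsilon>)",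
        OF cvG G0 pmG \<omega>_mono \<omega>_cont \<omega>_nonneg \<delta>0_ok e0 K0' Kd dpos dle sg tK etaK]
      show ?case unfolding Let_def by (rule fk)
    qed
  qed
qed

end
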